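(* Let $\mathcal{S}=\{c\in\mathbb{M}_2: 0\le c\le 1,\ \operatorname{trace}(c)=1,\ 0<\det(c)<\tfrac14\}$. Let $a=\begin{pmatrix} t&\alpha\\ \bar\alpha&1-t\end{pmatrix}$ and $b=\begin{pmatrix} x& y+iz\\ y-iz&1-x\end{pmatrix}$ be elements of $\mathcal{S}$ (with $t,x,y,z\in\mathbb{R}$, $\alpha\in\mathbb{C}$). Let $\lambda_1>\lambda_2$ be the eigenvalues of $a$, and set $\widetilde a=(t,\operatorname{Re}\alpha,\operatorname{Im}\alpha)$, $\widetilde{a'}=(1-t,-\operatorname{Re}\alpha,-\operatorname{Im}\alpha)$, $\widetilde{p_a}=\frac{1}{\lambda_1-\lambda_2}(t-\lambda_2,\operatorname{Re}\alpha,\operatorname{Im}\alpha)$, $\widetilde{p_a'}=\frac{1}{\lambda_1-\lambda_2}(\lambda_1-t,-\operatorname{Re}\alpha,-\operatorname{Im}\alpha)$, and $\mathcal{E}_a=\{v\in\mathbb{R}^3: d_2(v,\widetilde a)+d_2(v,\widetilde{a'})=1\}$, where $d_2$ is the Euclidean distance on $\mathbb{R}^3$. Then $a$ is absolutely compatible with $b$ if, and only if, the point $\widetilde b=(x,y,z)$ lies in $\mathcal{E}_a\setminus\{\widetilde{p_a},\widetilde{p_a'}\}$.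
   Context: $\mathbb{M}_2$ is the algebra of $2\times2$ complex matrices; $\operatorname{trace}$ is the non-normalized trace. For $x\in\mathbb{M}_2$, $|x|=(x^*x)^{1/2}$. Elements $0\le a,b\le 1$ are absolutely compatible if $|a-b|+|1-a-b|=1$. *)

theory Defs
  imports "HOL-Analysis.Analysis"
begin

text \<open>2x2 complex matrices are modelled as complex^2^2 (row i, column j: c$i$j).\<close>

definition adjoint2 :: "complex^2^2 \<Rightarrow> complex^2^2" where
  "adjoint2 c = (\<chi> i j. cnj (c$j$i))"

definition qform2 :: "complex^2^2 \<Rightarrow> complex^2 \<Rightarrow> complex" where
  "qform2 c v = (\<Sum>i\<in>UNIV. \<Sum>j\<in>UNIV. cnj (v$i) * c$i$j * v$j)"

definition psd2 :: "complex^2^2 \<Rightarrow> bool" where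
  "psd2 c \<longleftrightarrow> adjoint2 c = c \<and> (\<forall>v. Im (qform2 c v) = 0 \<and> 0 \<le> Re (qform2 c v))"

definition mabs2 :: "complex^2^2 \<Rightarrow> complex^2^2" where
  "mabs2 x = (THE r. psd2 r \<and> r ** r = adjoint2 x ** x)"

definition unit_interval2 :: "complex^2^2 \<Rightarrow> bool" where
  "unit_interval2 a \<longleftrightarrow> psd2 a \<and> psd2 (mat 1 - a)"

definition abs_compatible :: "complex^2^2 \<Rightarrow> complex^2^2 \<Rightarrow> bool" where
  "abs_compatible a b \<longleftrightarrow> mabs2 (a - b) + mabs2 (mat 1 - a - b) = mat 1"

definition S_set :: "(complex^2^2) set" where
  "S_set = {c. unit_interval2 c \<and> trace c = 1 \<and> Im (det c) = 0 \<and> 0 < Re (det c) \<and> Re (det c) < 1/4}"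

definition is_eigenvalue2 :: "complex^2^2 \<Rightarrow> complex \<Rightarrow> bool" where
  "is_eigenvalue2 c l \<longleftrightarrow> (\<exists>v. v \<noteq> 0 \<and> c *v v = l *s v)"

end

theory Submission
  imports Defs
begin


lemma mat2_eq: "(A::'a^2^2) = B \<longleftrightarrow> A$1$1 = B$1$1 \<and> A$1$2 = B$1$2 \<and> A$2$1 = B$2$1 \<and> A$2$2 = B$2$2"
  by (auto simp: vec_eq_iff forall_2)

lemma mmult2: "(A ** (B::'a::semiring_1^2^2))$i$j = A$i$1 * B$1$j + A$i$2 * B$2$j"
  by (simp add: matrix_matrix_mult_def sum_2)

lemma qform2_exp: "qform2 c v = cnj (v$1) * c$1$1 * v$1 + cnj (v$1) * c$1$2 * v$2 + cnj (v$2) * c$2$1 * v$1 + cnj (v$2) * c$2$2 * v$2"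
  by (simp add: qform2_def sum_2)

lemma adj2: "adjoint2 c $ i $ j = cnj (c$j$i)"
  by (simp add: adjoint2_def)

lemma scmat: "((c::real) *\<^sub>R mat 1 :: complex^2^2)$i$j = (if i = j then of_real c else 0)"
  unfolding vector_scaleR_component mat_def by (simp add: scaleR_conv_of_real)

lemma mat1_entry: "(mat 1 :: complex^2^2)$i$j = (if i = j then 1 else 0)"
  by (simp add: mat_def)

lemma scR1: "r *\<^sub>R (1::complex) = of_real r"
  by (simp add: scaleR_conv_of_real)

lemma psd_entries:
  assumes "psd2 R"
  shows "R$1$1 = of_real (Re (R$1$1))" "R$2$2 = of_real (Re (R$2$2))" "R$2$1 = cnj (R$1$2)"
    "Re (R$1$1) \<ge> 0" "Re (R$2$2) \<ge> 0"
    "Re (R$1$1) - 2 * (cmod (R$1$2))^2 + Re (R$2$2) * (cmod (R$1$2))^2 \<ge> 0"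
proof -
  have A: "adjoint2 R = R" and Q: "\<And>v. 0 \<le> Re (qform2 R v)" using assms by (auto simp: psd2_def)
  have a11: "cnj (R$1$1) = R$1$1" using arg_cong[OF A, of "\<lambda>M. M$1$1"] by (simp add: adj2)
  have a22: "cnj (R$2$2) = R$2$2" using arg_cong[OF A, of "\<lambda>M. M$2$2"] by (simp add: adj2)
  have a21: "cnj (R$1$2) = R$2$1" using arg_cong[OF A, of "\<lambda>M. M$2$1"] by (simp add: adj2)
  show "R$1$1 = of_real (Re (R$1$1))" using a11 by (metis Reals_cnj_iff complex_is_Real_iff of_real_Re)
  show "R$2$2 = of_real (Re (R$2$2))" using a22 by (metis Reals_cnj_iff complex_is_Real_iff of_real_Re)
  show "R$2$1 = cnj (R$1$2)" using a21 by simp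
  show "Re (R$1$1) \<ge> 0" using Q[of "vector [1,0]"] by (simp add: qform2_exp)
  show "Re (R$2$2) \<ge> 0" using Q[of "vector [0,1]"] by (simp add: qform2_exp)
  have "0 \<le> Re (qform2 R (vector [1, - cnj (R$1$2)]))" by (rule Q)
  also have "qform2 R (vector [1, - cnj (R$1$2)]) = R$1$1 - 2 * (R$1$2 * cnj (R$1$2)) + R$2$2 * (R$1$2 * cnj (R$1$2))"
    by (simp add: qform2_exp a21[symmetric] algebra_simps)
  also have "\<dots> = of_real (Re (R$1$1) - 2 * (cmod (R$1$2))^2 + Re (R$2$2) * (cmod (R$1$2))^2)"
  proof -
    have e1: "R$1$1 = of_real (Re (R$1$1))" "R$2$2 = of_real (Re (R$2$2))"
      using a11 a22 by (metis Reals_cnj_iff of_real_Re)+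
    show ?thesis apply (subst e1(1), subst e1(2)) by (simp flip: complex_norm_square)
  qed
  finally show "Re (R$1$1) - 2 * (cmod (R$1$2))^2 + Re (R$2$2) * (cmod (R$1$2))^2 \<ge> 0"
    by (simp only: Re_complex_of_real)
qed

lemma sqrt_unique:
  assumes P: "psd2 R" and E: "R ** R = c *\<^sub>R mat 1" and c: "0 \<le> c"
  shows "R = sqrt c *\<^sub>R mat 1"
proof -
  define u where "u = Re (R$1$1)"
  define s where "s = Re (R$2$2)"
  define v where "v = R$1$2"
  define n where "n = (cmod v)^2"
  note pe = psd_entries[OF P, folded u_def s_def v_def, folded n_def]
  have r11: "R$1$1 = of_real u" and r22: "R$2$2 = of_real s" and r21: "R$2$1 = cnj v"
    using pe by auto
  have vv: "v * cnj v = of_real n" unfolding n_def by (rule complex_norm_square[symmetric])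
  have vv': "cnj v * v = of_real n" using vv by (simp add: mult.commute)
  have "of_real c = (R ** R)$1$1" by (simp only: E scmat) simp
  also have "\<dots> = of_real (u*u + n)" by (simp add: mmult2 r11 r21 vv flip: v_def)
  finally have h1: "u*u + n = c" by (simp only: of_real_eq_iff)
  have "of_real c = (R ** R)$2$2" by (simp only: E scmat) simp
  also have "\<dots> = of_real (s * s + n)" by (simp add: mmult2 r22 r21 vv' flip: v_def)
  finally have h2: "s * s + n = c" by (simp only: of_real_eq_iff)
  have "0 = (R ** R)$1$2" by (simp only: E scmat) simp
  also have "\<dots> = of_real (u + s) * v" by (simp add: mmult2 r11 r22 algebra_simps flip: v_def)
  finally have h3: "of_real (u + s) * v = 0" by simp
  have us: "u \<ge> 0" "s \<ge> 0" "u - 2*n + s*n \<ge> 0" using pe by auto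
  have n0: "n \<ge> 0" by (simp add: n_def)
  have "u^2 = s^2" using h1 h2 by (simp add: power2_eq_square)
  then have "u = s" using us by (simp add: power2_eq_iff_nonneg)
  have "v = 0"
  proof (cases "u + s = 0")
    case True
    then have "u = 0" "s = 0" using us by auto
    then have "n = 0" using us n0 by auto
    then show ?thesis by (simp add: n_def)
  next
    case False then show ?thesis using h3 by (metis mult_eq_0_iff of_real_eq_0_iff)
  qed
  then have "n = 0" by (simp add: n_def)
  then have "c = u * u" using h1 by simp
  then have "u = sqrt c" using us by simp
  show ?thesis
    unfolding mat2_eq using \<open>u = s\<close> \<open>u = sqrt c\<close> \<open>v = 0\<close> r11 r22 r21
    by (simp add: mat1_entry scR1 flip: v_def)
qed

lemma psd_scal: assumes "0 \<le> r" shows "psd2 (r *\<^sub>R mat 1)"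
proof -
  have "adjoint2 (r *\<^sub>R mat 1) = r *\<^sub>R mat 1"
    by (simp add: mat2_eq adj2 mat1_entry scR1)
  moreover have "Im (qform2 (r *\<^sub>R mat 1) v) = 0 \<and> 0 \<le> Re (qform2 (r *\<^sub>R mat 1) v)" for v
  proof -
    have "qform2 (r *\<^sub>R mat 1) v = of_real r * (v$1 * cnj (v$1) + v$2 * cnj (v$2))"
      by (simp add: qform2_exp mat1_entry scR1 algebra_simps)
    then show ?thesis using assms by (simp add: complex_mult_cnj)
  qed
  ultimately show ?thesis by (simp add: psd2_def)
qed

lemma scal_sq: "((r::real) *\<^sub>R mat 1 :: complex^2^2) ** (r *\<^sub>R mat 1) = (r * r) *\<^sub>R mat 1"
  by (simp add: mat2_eq mmult2 mat1_entry scR1)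

lemma mabs_traceless:
  assumes m11: "M$1$1 = of_real p" and m22: "M$2$2 = - of_real p" and m21: "M$2$1 = cnj (M$1$2)"
  shows "mabs2 M = sqrt (p^2 + (cmod (M$1$2))^2) *\<^sub>R mat 1"
proof -
  define w where "w = M$1$2"
  define c where "c = p^2 + (cmod w)^2"
  have c0: "0 \<le> c" by (simp add: c_def)
  have ww: "w * cnj w = of_real ((cmod w)^2)" by (rule complex_norm_square[symmetric])
  have ww': "cnj w * w = of_real ((cmod w)^2)" using ww by (simp add: mult.commute)
  have AM: "adjoint2 M ** M = c *\<^sub>R mat 1"
    unfolding mat2_eq mmult2 adj2 scmat
    by (simp add: m11 m22 m21 scR1 c_def power2_eq_square ww ww' algebra_simps flip: w_def)
  have "mabs2 M = sqrt c *\<^sub>R mat 1"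
    unfolding mabs2_def
  proof (rule the_equality)
    show "psd2 (sqrt c *\<^sub>R mat 1) \<and> (sqrt c *\<^sub>R mat 1) ** (sqrt c *\<^sub>R mat 1) = adjoint2 M ** M"
      using c0 by (simp add: psd_scal scal_sq AM)
  next
    fix R assume "psd2 R \<and> R ** R = adjoint2 M ** M"
    then show "R = sqrt c *\<^sub>R mat 1" using sqrt_unique c0 AM by auto
  qed
  then show ?thesis by (simp add: c_def w_def)
qed

lemma dist3: "dist (vector [a1, a2, a3] :: real^3) (vector [b1, b2, b3]) = sqrt ((a1-b1)^2 + (a2-b2)^2 + (a3-b3)^2)"
  unfolding dist_vec_def L2_set_def sum_3 by (simp add: dist_real_def)

lemma vec3_eq: "(vector [a1, a2, a3] :: real^3) = vector [b1, b2, b3] \<longleftrightarrow> a1 = b1 \<and> a2 = b2 \<and> a3 = b3"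
  by (auto simp: vec_eq_iff forall_3)

lemma scale3: "c *\<^sub>R (vector [a1, a2, a3] :: real^3) = vector [c*a1, c*a2, c*a3]"
  by (auto simp: vec_eq_iff forall_3)

lemma char_eq:
  assumes ha: "a = vector [vector [complex_of_real t, \<alpha>], vector [cnj \<alpha>, complex_of_real (1 - t)]]"
    and e: "is_eigenvalue2 a (complex_of_real l)"
  shows "(t - l) * (1 - t - l) - (cmod \<alpha>)^2 = 0"
proof -
  obtain v where v0: "v \<noteq> 0" and ev: "a *v v = of_real l *s v" using e by (auto simp: is_eigenvalue2_def)
  have q1: "of_real t * v$1 + \<alpha> * v$2 = of_real l * v$1"
    using arg_cong[OF ev, of "\<lambda>w. w$1"] by (simp add: matrix_vector_mult_def sum_2 ha)
  have q2: "cnj \<alpha> * v$1 + of_real (1 - t) * v$2 = of_real l * v$2"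
    using arg_cong[OF ev, of "\<lambda>w. w$2"] by (simp add: matrix_vector_mult_def sum_2 ha)
  define D where "D = (of_real t - of_real l) * (of_real (1 - t) - of_real l) - \<alpha> * cnj \<alpha>"
  have "D * v$1 = (of_real (1 - t) - of_real l) * ((of_real t - of_real l) * v$1) - \<alpha> * (cnj \<alpha> * v$1)"
    by (simp add: D_def algebra_simps)
  also have "\<dots> = 0"
  proof -
    have h1: "(of_real t - of_real l) * v$1 = - \<alpha> * v$2" using q1 by (simp add: algebra_simps)
    have h2: "cnj \<alpha> * v$1 = (of_real l - of_real (1 - t)) * v$2" using q2 by (simp add: algebra_simps)
    show ?thesis unfolding h1 h2 by (simp add: algebra_simps)
  qed
  finally have d1: "D * v$1 = 0" .
  have "D * v$2 = (of_real t - of_real l) * ((of_real (1 - t) - of_real l) * v$2) - cnj \<alpha> * (\<alpha> * v$2)"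
    by (simp add: D_def algebra_simps)
  also have "\<dots> = 0"
  proof -
    have h1: "(of_real (1 - t) - of_real l) * v$2 = - cnj \<alpha> * v$1" using q2 by (simp add: algebra_simps)
    have h2: "\<alpha> * v$2 = (of_real l - of_real t) * v$1" using q1 by (simp add: algebra_simps)
    show ?thesis unfolding h1 h2 by (simp add: algebra_simps)
  qed
  finally have d2: "D * v$2 = 0" .
  have "v$1 \<noteq> 0 \<or> v$2 \<noteq> 0" using v0 by (auto simp: vec_eq_iff forall_2)
  then have "D = 0" using d1 d2 by auto
  moreover have "D = of_real ((t - l) * (1 - t - l) - (cmod \<alpha>)^2)"
    unfolding D_def complex_norm_square[symmetric] by simp
  ultimately show ?thesis by (metis of_real_eq_0_iff)
qed

theorem theorem3p7:
  fixes a b :: "complex^2^2" and t x y z l1 l2 :: real and \<alpha> :: complex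
  assumes ha: "a = vector [vector [complex_of_real t, \<alpha>], vector [cnj \<alpha>, complex_of_real (1 - t)]]"
    and hb: "b = vector [vector [complex_of_real x, Complex y z], vector [Complex y (- z), complex_of_real (1 - x)]]"
    and aS: "a \<in> S_set" and bS: "b \<in> S_set"
    and hl: "l1 > l2"
    and e1: "is_eigenvalue2 a (complex_of_real l1)"
    and e2: "is_eigenvalue2 a (complex_of_real l2)"
  shows "abs_compatible a b \<longleftrightarrow>
    (let ta = (vector [t, Re \<alpha>, Im \<alpha>] :: real^3);
         ta' = (vector [1 - t, - Re \<alpha>, - Im \<alpha>] :: real^3);
         pa = (1 / (l1 - l2)) *\<^sub>R (vector [t - l2, Re \<alpha>, Im \<alpha>] :: real^3);
         pa' = (1 / (l1 - l2)) *\<^sub>R (vector [l1 - t, - Re \<alpha>, - Im \<alpha>] :: real^3);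
         Ea = {v :: real^3. dist v ta + dist v ta' = 1}
     in (vector [x, y, z] :: real^3) \<in> Ea - {pa, pa'})"
proof -
  have a11: "a$1$1 = of_real t" and a12: "a$1$2 = \<alpha>" and a21: "a$2$1 = cnj \<alpha>" and a22: "a$2$2 = of_real (1 - t)"
    by (simp_all add: ha)
  have b11: "b$1$1 = of_real x" and b12: "b$1$2 = Complex y z" and b21: "b$2$1 = Complex y (- z)" and b22: "b$2$2 = of_real (1 - x)"
    by (simp_all add: hb)
  have cy: "Complex y (- z) = cnj (Complex y z)" by (simp add: complex_eq_iff)
  have m1: "mabs2 (a - b) = sqrt ((t - x)^2 + (cmod (\<alpha> - Complex y z))^2) *\<^sub>R mat 1"
  proof -
    have "mabs2 (a - b) = sqrt ((t - x)^2 + (cmod ((a - b)$1$2))^2) *\<^sub>R mat 1"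
      by (rule mabs_traceless) (simp_all add: a11 a12 a21 a22 b11 b12 b21 b22 cy)
    then show ?thesis by (simp add: a12 b12)
  qed
  have m2: "mabs2 (mat 1 - a - b) = sqrt ((1 - t - x)^2 + (cmod (- \<alpha> - Complex y z))^2) *\<^sub>R mat 1"
  proof -
    have "mabs2 (mat 1 - a - b) = sqrt ((1 - t - x)^2 + (cmod ((mat 1 - a - b)$1$2))^2) *\<^sub>R mat 1"
      by (rule mabs_traceless) (simp_all add: a11 a12 a21 a22 b11 b12 b21 b22 cy mat1_entry)
    then show ?thesis by (simp add: a12 b12 mat1_entry)
  qed
  define r1 where "r1 = sqrt ((t - x)^2 + (cmod (\<alpha> - Complex y z))^2)"
  define r2 where "r2 = sqrt ((1 - t - x)^2 + (cmod (- \<alpha> - Complex y z))^2)"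
  have AC: "abs_compatible a b \<longleftrightarrow> r1 + r2 = 1"
  proof -
    have "abs_compatible a b \<longleftrightarrow> r1 *\<^sub>R mat 1 + r2 *\<^sub>R mat 1 = (mat 1 :: complex^2^2)"
      unfolding abs_compatible_def m1 m2 r1_def r2_def ..
    also have "\<dots> \<longleftrightarrow> r1 + r2 = 1"
    proof
      assume "r1 *\<^sub>R mat 1 + r2 *\<^sub>R mat 1 = (mat 1 :: complex^2^2)"
      from arg_cong[OF this, of "\<lambda>M. M$1$1"] have "of_real r1 + of_real r2 = (1::complex)"
        by (simp add: mat1_entry scR1)
      then show "r1 + r2 = 1" by (metis of_real_1 of_real_add of_real_eq_iff)
    next
      assume "r1 + r2 = 1"
      then show "r1 *\<^sub>R mat 1 + r2 *\<^sub>R mat 1 = (mat 1 :: complex^2^2)"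
        by (simp flip: scaleR_add_left)
    qed
    finally show ?thesis .
  qed
  have D1: "dist (vector [x, y, z] :: real^3) (vector [t, Re \<alpha>, Im \<alpha>]) = r1"
    unfolding dist3 r1_def cmod_power2 by (simp add: power2_commute)
  have D2: "dist (vector [x, y, z] :: real^3) (vector [1 - t, - Re \<alpha>, - Im \<alpha>]) = r2"
    unfolding dist3 r2_def cmod_power2 by (simp add: power2_commute algebra_simps)
  have detb: "x * (1 - x) - y^2 - z^2 > 0"
  proof -
    have "det b = of_real (x * (1 - x) - y^2 - z^2)"
      by (simp add: det_2 b11 b12 b21 b22 Complex_eq power2_eq_square algebra_simps)
    then show ?thesis using bS by (simp add: S_set_def)
  qed
  have c1: "(t - l1) * (1 - t - l1) - (cmod \<alpha>)^2 = 0" by (rule char_eq[OF ha e1])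
  have c2: "(t - l2) * (1 - t - l2) - (cmod \<alpha>)^2 = 0" by (rule char_eq[OF ha e2])
  define d where "d = l1 - l2"
  have d0: "d > 0" using hl by (simp add: d_def)
  have "(l1 - l2) * (l1 + l2 - 1) = 0" using c1 c2 by (simp add: algebra_simps power2_eq_square)
  then have sum1: "l1 = 1 - l2" using hl by simp
  have ca: "(cmod \<alpha>)^2 = (Re \<alpha>)^2 + (Im \<alpha>)^2" by (rule cmod_power2)
  have N1: "(vector [x, y, z] :: real^3) \<noteq> (1 / (l1 - l2)) *\<^sub>R vector [t - l2, Re \<alpha>, Im \<alpha>]"
  proof
    assume "(vector [x, y, z] :: real^3) = (1 / (l1 - l2)) *\<^sub>R vector [t - l2, Re \<alpha>, Im \<alpha>]"
    then have "x = (t - l2) / d" "y = Re \<alpha> / d" "z = Im \<alpha> / d"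
      unfolding scale3 vec3_eq d_def by auto
    then have xyz: "x * d = t - l2" "y * d = Re \<alpha>" "z * d = Im \<alpha>" using d0 by auto
    have "(x * (1 - x) - y^2 - z^2) * (d * d) = (x * d) * (d - x * d) - (y * d)^2 - (z * d)^2"
      by (simp add: algebra_simps power2_eq_square)
    also have "\<dots> = (t - l2) * (d - (t - l2)) - (Re \<alpha>)^2 - (Im \<alpha>)^2"
      using xyz by simp
    also have "\<dots> = 0" using c2 ca sum1 by (simp add: d_def algebra_simps)
    finally show False using detb d0 by simp
  qed
  have N2: "(vector [x, y, z] :: real^3) \<noteq> (1 / (l1 - l2)) *\<^sub>R vector [l1 - t, - Re \<alpha>, - Im \<alpha>]"
  proof
    assume "(vector [x, y, z] :: real^3) = (1 / (l1 - l2)) *\<^sub>R vector [l1 - t, - Re \<alpha>, - Im \<alpha>]"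
    then have "x = (l1 - t) / d" "y = - Re \<alpha> / d" "z = - Im \<alpha> / d"
      unfolding scale3 vec3_eq d_def by auto
    then have xyz: "x * d = l1 - t" "y * d = - Re \<alpha>" "z * d = - Im \<alpha>" using d0 by auto
    have "(x * (1 - x) - y^2 - z^2) * (d * d) = (x * d) * (d - x * d) - (y * d)^2 - (z * d)^2"
      by (simp add: algebra_simps power2_eq_square)
    also have "\<dots> = (l1 - t) * (d - (l1 - t)) - (Re \<alpha>)^2 - (Im \<alpha>)^2"
      using xyz by simp
    also have "\<dots> = (t - l1) * (1 - t - l1) - (cmod \<alpha>)^2"
    proof -
      have dd: "d - (l1 - t) = - (1 - t - l1)" using sum1 by (simp add: d_def)
      show ?thesis unfolding dd ca by (simp add: algebra_simps)
    qed
    also have "\<dots> = 0" by (rule c1)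
    finally show False using detb d0 by simp
  qed
  show ?thesis unfolding Let_def AC using D1 D2 N1 N2 by auto
qed

end
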